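(* Let $\Omega\subseteq\mathbb{C}$ be a domain, $F:\Omega\to B(\mathfrak{X})$ a function, $\mathcal{H}=\mathcal{H}_F$ the associated reproducing kernel Hilbert space, $\{u_n\}_{n\ge1}$ an orthonormal basis of $\mathfrak{X}$, and $F_n(z)=F(z)u_n$ for $z\in\Omega$. Then every element of $\mathcal{H}$ is an $\mathfrak{X}$-valued analytic function on $\Omega$ if and only if each $F_n$ is analytic on $\Omega$ and $z\mapsto\|F(z)\|$ is bounded on every compact subset of $\Omega$.
   Context: $\mathfrak{X}$ is a complex separable Hilbert space. $\mathcal{H}_F=\{f_u: u\in\mathfrak{X}\}$ with $f_u(z)=F(z)u$, normed by $\|f_u\|=\inf\{\|w\|_{\mathfrak{X}}: F(\cdot)w=f_u\}$. *)

theory Defs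
  imports "HOL-Analysis.Analysis"
begin

text \<open>HOL-Analysis only provides real inner product spaces, so a complex
Hilbert space is introduced here as a type class: a real Banach space with a
compatible complex scalar multiplication and a sesquilinear inner product
(linear in the second argument) that induces the norm.\<close>

class cvector = real_vector +
  fixes scaleC :: "complex \<Rightarrow> 'a \<Rightarrow> 'a"
  assumes scaleC_add_right: "scaleC a (x + y) = scaleC a x + scaleC a y"
    and scaleC_add_left: "scaleC (a + b) x = scaleC a x + scaleC b x"
    and scaleC_scaleC: "scaleC a (scaleC b x) = scaleC (a * b) x"
    and scaleC_one: "scaleC 1 x = x"
    and scaleR_scaleC: "scaleR r x = scaleC (complex_of_real r) x"

class chilbert = cvector + banach +
  fixes cinner :: "'a \<Rightarrow> 'a \<Rightarrow> complex"
  assumes cinner_commute: "cinner x y = cnj (cinner y x)"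
    and cinner_add_right: "cinner x (y + z) = cinner x y + cinner x z"
    and cinner_scaleC_right: "cinner x (scaleC c y) = c * cinner x y"
    and cinner_self_norm: "cinner x x = complex_of_real ((norm x)\<^sup>2)"

definition bounded_clinear :: "('a::{cvector,real_normed_vector} \<Rightarrow> 'b::{cvector,real_normed_vector}) \<Rightarrow> bool" where
  "bounded_clinear T \<longleftrightarrow>
     (\<forall>x y. T (x + y) = T x + T y) \<and>
     (\<forall>c x. T (scaleC c x) = scaleC c (T x)) \<and>
     (\<exists>K. \<forall>x. norm (T x) \<le> norm x * K)"

definition orthonormal_basis :: "(nat \<Rightarrow> 'a::chilbert) \<Rightarrow> bool" where
  "orthonormal_basis u \<longleftrightarrow>
     (\<forall>m n. cinner (u m) (u n) = (if m = n then 1 else 0)) \<and>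
     (\<forall>x. (\<forall>n. cinner (u n) x = 0) \<longrightarrow> x = 0)"

definition vanalytic_on :: "(complex \<Rightarrow> 'a::{cvector,real_normed_vector}) \<Rightarrow> complex set \<Rightarrow> bool" where
  "vanalytic_on f S \<longleftrightarrow>
     (\<forall>z\<in>S. \<exists>d. ((\<lambda>w. scaleC (inverse (w - z)) (f w - f z)) \<longlongrightarrow> d) (at z))"

definition H_F :: "(complex \<Rightarrow> 'a \<Rightarrow> 'a) \<Rightarrow> (complex \<Rightarrow> 'a) set" where
  "H_F F = {f. \<exists>u. f = (\<lambda>z. F z u)}"

end

theory Submission imports Defs "HOL-Complex_Analysis.Complex_Analysis" begin


context chilbert begin

lemma cinner_zero_right[simp]: "cinner x 0 = 0"
  using cinner_add_right[of x 0 0] by simp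

lemma cinner_diff_right: "cinner x (y - z) = cinner x y - cinner x z"
  using cinner_add_right[of x "y - z" z] by (simp add: algebra_simps)

lemma cinner_minus_right: "cinner x (- y) = - cinner x y"
  using cinner_diff_right[of x 0 y] by simp

lemma cinner_zero_left[simp]: "cinner 0 x = 0"
  by (subst cinner_commute) simp

lemma cinner_add_left: "cinner (x + y) z = cinner x z + cinner y z"
  by (metis cinner_commute cinner_add_right complex_cnj_add)

lemma cinner_diff_left: "cinner (x - y) z = cinner x z - cinner y z"
  by (metis cinner_commute cinner_diff_right complex_cnj_diff)

lemma cinner_scaleC_left: "cinner (scaleC c x) y = cnj c * cinner x y"
  by (metis cinner_commute cinner_scaleC_right complex_cnj_cnj complex_cnj_mult)

lemma cinner_sum_right: "cinner x (sum f A) = (\<Sum>a\<in>A. cinner x (f a))"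
  by (induction A rule: infinite_finite_induct) (auto simp: cinner_add_right)

lemma cinner_sum_left: "cinner (sum f A) x = (\<Sum>a\<in>A. cinner (f a) x)"
  by (induction A rule: infinite_finite_induct) (auto simp: cinner_add_left)

lemma cinner_self_real: "Re (cinner x x) = (norm x)^2"
  by (simp add: cinner_self_norm)

lemma norm_scaleC: "norm (scaleC c x) = cmod c * norm x"
proof -
  have "cinner (scaleC c x) (scaleC c x) = cnj c * c * cinner x x"
    by (simp add: cinner_scaleC_left cinner_scaleC_right)
  also have "cnj c * c = complex_of_real ((cmod c)^2)"
    by (metis complex_norm_square mult.commute)
  finally have "complex_of_real ((norm (scaleC c x))^2) = of_real ((cmod c)^2 * (norm x)^2)"
    unfolding cinner_self_norm of_real_mult .
  then have "(norm (scaleC c x))^2 = (cmod c * norm x)^2"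
    unfolding of_real_eq_iff power_mult_distrib .
  then show ?thesis
    by (rule power2_eq_imp_eq) simp_all
qed

lemma scaleC_zero_right[simp]: "scaleC c 0 = 0"
  using scaleC_add_right[of c 0 0] by simp

lemma scaleC_diff_right: "scaleC c (x - y) = scaleC c x - scaleC c y"
  using scaleC_add_right[of c "x - y" y] by (simp add: algebra_simps)

lemma Cauchy_Schwarz_c: "cmod (cinner x y) \<le> norm x * norm y"
proof (cases "x = 0")
  case True then show ?thesis by simp
next
  case False
  define N where "N = (norm x)^2"
  have N: "N > 0" using False by (simp add: N_def)
  define a where "a = cinner x y"
  define t where "t = a / of_real N"
  have "cinner (y - scaleC t x) (y - scaleC t x) =
      cinner y y - t * cinner y x - cnj t * cinner x y + cnj t * t * cinner x x"
    by (simp add: cinner_diff_left cinner_diff_right cinner_scaleC_left cinner_scaleC_right algebra_simps)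
  also have "\<dots> = of_real ((norm y)^2) - of_real ((cmod a)^2 / N)"
  proof -
    have yx: "cinner y x = cnj a" by (simp add: a_def cinner_commute[of y x])
    have xx: "cinner x x = of_real N" by (simp add: N_def cinner_self_norm)
    have aa: "cnj a * a = of_real ((cmod a)^2)"
      by (metis complex_norm_square mult.commute)
    define q where "q = complex_of_real ((cmod a)^2 / N)"
    have Nz: "complex_of_real N \<noteq> 0" using N by simp
    have q: "q = cnj a * a / of_real N" unfolding q_def aa by simp
    have t1: "t * cnj a = q" unfolding q t_def by (simp add: mult.commute)
    have t2: "cnj t * a = q" unfolding q t_def by simp
    have t3: "cnj t * t * of_real N = q" unfolding q t_def using Nz by (simp add: field_simps)
    show ?thesis unfolding a_def[symmetric] yx xx unfolding t1 t2 t3 q_def[symmetric] cinner_self_norm[of y] by simp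
  qed
  finally have "complex_of_real ((norm (y - scaleC t x))^2) = of_real ((norm y)^2 - (cmod a)^2 / N)"
    unfolding cinner_self_norm of_real_diff .
  then have "(norm (y - scaleC t x))^2 = (norm y)^2 - (cmod a)^2 / N"
    unfolding of_real_eq_iff .
  then have "(cmod a)^2 / N \<le> (norm y)^2"
    using zero_le_power2[of "norm (y - scaleC t x)"] by linarith
  then have "(cmod a)^2 \<le> (norm x * norm y)^2" using N
    by (simp add: N_def pos_divide_le_eq power_mult_distrib mult.commute)
  then show ?thesis unfolding a_def
    by (rule power2_le_imp_le) simp
qed

end




lemma bcl_add: "bounded_clinear T \<Longrightarrow> T (x + y) = T x + T y"
  by (simp add: bounded_clinear_def)
lemma bcl_scaleC: "bounded_clinear T \<Longrightarrow> T (scaleC c x) = scaleC c (T x)"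
  by (simp add: bounded_clinear_def)

lemma bcl_bounded_linear:
  fixes T :: "'a::chilbert \<Rightarrow> 'b::chilbert"
  assumes "bounded_clinear T" shows "bounded_linear T"
proof -
  obtain K where K: "\<And>x. norm (T x) \<le> norm x * K" using assms by (auto simp: bounded_clinear_def)
  show ?thesis
  proof (rule bounded_linear_intro[where K=K])
    show "T (x + y) = T x + T y" for x y by (rule bcl_add[OF assms])
    show "T (scaleR r x) = scaleR r (T x)" for r x
      by (simp add: scaleR_scaleC bcl_scaleC[OF assms])
  qed (rule K)
qed

lemma bcl_sum:
  fixes T :: "'a::chilbert \<Rightarrow> 'b::chilbert"
  assumes "bounded_clinear T" shows "T (sum f A) = (\<Sum>a\<in>A. T (f a))"
  using linear_sum[OF bounded_linear.linear[OF bcl_bounded_linear[OF assms]]] by simp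

lemma bcl_diff:
  fixes T :: "'a::chilbert \<Rightarrow> 'b::chilbert"
  assumes "bounded_clinear T" shows "T (x - y) = T x - T y"
  using linear_diff[OF bounded_linear.linear[OF bcl_bounded_linear[OF assms]]] by simp

lemma bcl_onorm:
  fixes T :: "'a::chilbert \<Rightarrow> 'b::chilbert"
  assumes "bounded_clinear T" shows "norm (T x) \<le> onorm T * norm x"
  using onorm[OF bcl_bounded_linear[OF assms]] .

lemma tendsto_cinner_right:
  fixes g :: "'b \<Rightarrow> 'a::chilbert"
  assumes "(g \<longlongrightarrow> l) F" shows "((\<lambda>x. cinner v (g x)) \<longlongrightarrow> cinner v l) F"
proof -
  have "bounded_linear (\<lambda>x::'a. cinner v x)"
  proof (rule bounded_linear_intro[where K="norm v"])
    show "cinner v (x + y) = cinner v x + cinner v y" for x y by (rule cinner_add_right)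
    show "cinner v (scaleR r x) = scaleR r (cinner v x)" for r x
      by (simp add: scaleR_scaleC cinner_scaleC_right scaleR_conv_of_real)
    show "norm (cinner v x) \<le> norm x * norm v" for x
      using Cauchy_Schwarz_c[of v x] by (simp add: mult.commute)
  qed
  from bounded_linear.tendsto[OF this assms] show ?thesis .
qed

lemma vanalytic_continuous:
  fixes f :: "complex \<Rightarrow> 'a::chilbert"
  assumes "vanalytic_on f S" "z \<in> S" shows "isCont f z"
proof -
  obtain d where d: "((\<lambda>w. scaleC (inverse (w - z)) (f w - f z)) \<longlongrightarrow> d) (at z)"
    using assms by (auto simp: vanalytic_on_def)
  have "((\<lambda>w. f w - f z) \<longlongrightarrow> 0) (at z)"
  proof (rule Lim_null_comparison)
    have key: "norm (f w - f z) \<le> cmod (w - z) * norm (scaleC (inverse (w - z)) (f w - f z))"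
      if "w \<noteq> z" for w
    proof -
      have "cmod (w - z) * cmod (inverse (w - z)) = 1" using that by (simp add: norm_inverse)
      then show ?thesis by (simp add: norm_scaleC mult.assoc[symmetric])
    qed
    show "\<forall>\<^sub>F w in at z. norm (f w - f z) \<le> cmod (w - z) * norm (scaleC (inverse (w - z)) (f w - f z))"
      using key by (auto simp: eventually_at_filter intro!: always_eventually)
    have "((\<lambda>w. cmod (w - z) * norm (scaleC (inverse (w - z)) (f w - f z))) \<longlongrightarrow> cmod (z - z) * norm d) (at z)"
      by (intro tendsto_intros d)
    then show "((\<lambda>w. cmod (w - z) * norm (scaleC (inverse (w - z)) (f w - f z))) \<longlongrightarrow> 0) (at z)" by simp
  qed
  then show ?thesis by (simp add: isCont_def LIM_zero_iff)
qed

lemma vanalytic_holo: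
  fixes f :: "complex \<Rightarrow> 'a::chilbert"
  assumes "vanalytic_on f S" "open S"
  shows "(\<lambda>z. cinner v (f z)) holomorphic_on S"
  unfolding holomorphic_on_def
proof
  fix z assume z: "z \<in> S"
  obtain d where d: "((\<lambda>w. scaleC (inverse (w - z)) (f w - f z)) \<longlongrightarrow> d) (at z)"
    using assms z by (auto simp: vanalytic_on_def)
  from tendsto_cinner_right[OF d, of v]
  have "((\<lambda>w. (cinner v (f w) - cinner v (f z)) / (w - z)) \<longlongrightarrow> cinner v d) (at z)"
    by (simp add: cinner_scaleC_right cinner_diff_right divide_inverse mult.commute)
  then have "((\<lambda>z. cinner v (f z)) has_field_derivative cinner v d) (at z)"
    by (simp add: has_field_derivative_iff)
  then show "(\<lambda>z. cinner v (f z)) field_differentiable at z within S"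
    using field_differentiable_at_within field_differentiable_def by blast
qed




lemma ubp:
  fixes T :: "'i \<Rightarrow> 'a::chilbert \<Rightarrow> 'b::chilbert"
  assumes bcl: "\<forall>i\<in>I. bounded_clinear (T i)" and pt: "\<forall>x. \<exists>B. \<forall>i\<in>I. norm (T i x) \<le> B"
  shows "\<exists>M. \<forall>i\<in>I. onorm (T i) \<le> M"
proof -
  define E where "E m = {x. \<forall>i\<in>I. norm (T i x) \<le> real m}" for m :: nat
  have clE: "closed (E m)" for m
  proof -
    have "E m = (\<Inter>i\<in>I. {x. norm (T i x) \<le> real m})" by (auto simp: E_def)
    moreover have "closed {x. norm (T i x) \<le> real m}" if "i \<in> I" for i
    proof -
      have "continuous_on UNIV (T i)"
        using bcl that bcl_bounded_linear linear_continuous_on by blast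
      then show ?thesis
        by (intro closed_Collect_le continuous_intros) auto
    qed
    ultimately show ?thesis by auto
  qed
  have UE0: "x \<in> \<Union>(range E)" for x :: 'a
  proof -
    obtain B where "\<forall>i\<in>I. norm (T i x) \<le> B" using pt by blast
    moreover obtain m :: nat where "B \<le> real m" using real_arch_simple by blast
    ultimately have "x \<in> E m" unfolding E_def by force
    then show "x \<in> \<Union>(range E)" by blast
  qed
  then have UE: "\<Union>(range E) = UNIV" by blast
  have "\<exists>m. interior (E m) \<noteq> {}"
  proof (rule ccontr)
    assume "\<not> ?thesis"
    then have nE: "interior (E m) = {}" for m by blast
    have "euclidean interior_of \<Union>(range E) = {}"
    proof (rule Baire_category_alt)
      show "completely_metrizable_space (euclidean::'a topology) \<or> locally_compact_space (euclidean::'a topology) \<and> regular_space (euclidean::'a topology)"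
        using completely_metrizable_space_euclidean by blast
      show "countable (range E)" by simp
      fix T assume "T \<in> range E"
      then obtain m where "T = E m" by blast
      then show "closedin euclidean T \<and> euclidean interior_of T = {}"
        using clE nE by simp
    qed
    then show False using UE by simp
  qed
  then obtain m x0 where x0: "x0 \<in> interior (E m)" by blast
  have "open (interior (E m))" by simp
  then obtain r where r0: "r > 0" "ball x0 r \<subseteq> interior (E m)"
    using x0 open_contains_ball by blast
  then have r: "r > 0" "ball x0 r \<subseteq> E m" using interior_subset by blast+
  show ?thesis
  proof (intro exI ballI)
    fix i assume i: "i \<in> I"
    note lin = bcl_bounded_linear[OF bcl[rule_format, OF i]]
    show "onorm (T i) \<le> 4 * real m / r"
    proof (rule onorm_bound)
      show "0 \<le> 4 * real m / r" using r by simp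
      fix x :: 'a
      show "norm (T i x) \<le> 4 * real m / r * norm x"
      proof (cases "x = 0")
        case True then show ?thesis using linear_0[OF bounded_linear.linear[OF lin]] by simp
      next
        case False
        define c where "c = r / (2 * norm x)"
        have c: "c > 0" using False r by (simp add: c_def)
        have "norm (scaleR c x) < r" using False r by (simp add: c_def)
        then have "x0 + scaleR c x \<in> E m" "x0 \<in> E m" using r by (auto simp: dist_norm)
        then have a: "norm (T i (x0 + scaleR c x)) \<le> m" "norm (T i x0) \<le> m" using i by (auto simp: E_def)
        have "T i (scaleR c x) = T i (x0 + scaleR c x) - T i x0"
          using linear_add[OF bounded_linear.linear[OF lin]] by simp
        then have "norm (T i (scaleR c x)) \<le> 2 * real m"
          using a norm_triangle_ineq4[of "T i (x0 + scaleR c x)" "T i x0"] by simp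
        then have "c * norm (T i x) \<le> 2 * real m"
          using linear_scale[OF bounded_linear.linear[OF lin]] c by simp
        then have "norm (T i x) \<le> 2 * real m / c" using c by (simp add: field_simps)
        also have "\<dots> = 4 * real m / r * norm x" using False r by (simp add: c_def field_simps)
        finally show ?thesis .
      qed
    qed
  qed
qed




lemma onb_orth: "orthonormal_basis u \<Longrightarrow> cinner (u m) (u n) = (if m = n then 1 else 0)"
  by (simp add: orthonormal_basis_def)

lemma cnj_mult_self: "cnj z * z = (complex_of_real (cmod z))^2"
  by (metis complex_norm_square mult.commute of_real_power)

lemma normsq_sum:
  fixes u :: "nat \<Rightarrow> 'a::chilbert"
  assumes onb: "orthonormal_basis u" and fin: "finite A"
  shows "(norm (\<Sum>n\<in>A. scaleC (a n) (u n)))^2 = (\<Sum>n\<in>A. (cmod (a n))^2)"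
proof -
  have "cinner (\<Sum>n\<in>A. scaleC (a n) (u n)) (\<Sum>n\<in>A. scaleC (a n) (u n))
      = (\<Sum>m\<in>A. cnj (a m) * a m)"
    using fin by (simp add: cinner_sum_left cinner_sum_right cinner_scaleC_left cinner_scaleC_right
        onb_orth[OF onb] if_distrib sum.delta sum.delta' mult.commute cong: if_cong)
  also have "\<dots> = of_real (\<Sum>m\<in>A. (cmod (a m))^2)"
    by (simp add: cnj_mult_self)
  finally have "cinner (\<Sum>n\<in>A. scaleC (a n) (u n)) (\<Sum>n\<in>A. scaleC (a n) (u n)) = of_real (\<Sum>m\<in>A. (cmod (a m))^2)" .
  then show ?thesis unfolding cinner_self_norm of_real_eq_iff .
qed

lemma onb_expansion:
  fixes u :: "nat \<Rightarrow> 'a::chilbert"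
  assumes onb: "orthonormal_basis u"
  shows "(\<lambda>N. \<Sum>n<N. scaleC (cinner (u n) x) (u n)) \<longlonglongrightarrow> x"
proof -
  define c where "c n = cinner (u n) x" for n
  define s where "s N = (\<Sum>n<N. scaleC (c n) (u n))" for N
  define G where "G N = (\<Sum>n<N. (cmod (c n))^2)" for N
  have cs: "cinner (u k) (s N) = (if k < N then c k else 0)" for k N
    by (simp add: s_def cinner_sum_right cinner_scaleC_right onb_orth[OF onb] if_distrib cong: if_cong)
  have ss: "cinner (s N) (s N) = of_real (G N)" for N
    using normsq_sum[OF onb, of "{..<N}" c] by (simp add: cinner_self_norm s_def G_def)
  have sx: "cinner (s N) x = of_real (G N)" for N
    by (simp add: s_def G_def cinner_sum_left cinner_scaleC_left c_def[symmetric] cnj_mult_self)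
  have xs: "cinner x (s N) = of_real (G N)" for N
    using sx[of N] by (metis cinner_commute complex_cnj_complex_of_real)
  have bessel: "G N \<le> (norm x)^2" for N
  proof -
    have "cinner (x - s N) (x - s N) = cinner x x - of_real (G N)"
      by (simp add: cinner_diff_left cinner_diff_right ss sx xs)
    then have "complex_of_real ((norm (x - s N))^2) = of_real ((norm x)^2 - G N)"
      unfolding cinner_self_norm of_real_diff .
    then have "(norm (x - s N))^2 = (norm x)^2 - G N"
      unfolding of_real_eq_iff .
    then show ?thesis by (smt (verit) zero_le_power2)
  qed
  have summ: "summable (\<lambda>n. (cmod (c n))^2)"
    by (rule summableI_nonneg_bounded[where x="(norm x)^2"]) (auto simp: bessel[unfolded G_def])
  then have "convergent G" unfolding G_def by (simp add: summable_iff_convergent)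
  then have CG: "Cauchy G" by (simp add: convergent_Cauchy)
  have dist_s: "(dist (s m) (s n))^2 = \<bar>G m - G n\<bar>" for m n
  proof -
    have *: "(dist (s m) (s n))^2 = G n - G m" if "m \<le> n" for m n
    proof -
      have "s n - s m = (\<Sum>k\<in>{m..<n}. scaleC (c k) (u k))"
        unfolding s_def using that
        by (metis (no_types) sum_diff_nat_ivl[of 0 m n] atLeast0LessThan zero_le)
      moreover have "G n - G m = (\<Sum>k\<in>{m..<n}. (cmod (c k))^2)"
        unfolding G_def using that
        by (metis (no_types) sum_diff_nat_ivl[of 0 m n] atLeast0LessThan zero_le)
      moreover have "dist (s m) (s n) = norm (s n - s m)"
        by (metis dist_norm norm_minus_commute)
      ultimately show ?thesis
        using normsq_sum[OF onb, of "{m..<n}" c] by simp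
    qed
    have mono: "G m \<le> G n" if "m \<le> n" for m n
      unfolding G_def using that by (intro sum_mono2) auto
    show ?thesis
    proof (cases "m \<le> n")
      case True then show ?thesis using *[OF True] mono[OF True] by simp
    next
      case False then have "n \<le> m" by simp
      then show ?thesis using *[OF \<open>n \<le> m\<close>] mono[OF \<open>n \<le> m\<close>] by (simp add: dist_commute)
    qed
  qed
  have "Cauchy s"
  proof (rule metric_CauchyI)
    fix e :: real assume e: "e > 0"
    then obtain M where M: "\<forall>m\<ge>M. \<forall>n\<ge>M. dist (G m) (G n) < e^2"
      using CG metric_CauchyD[of G "e^2"] by auto
    show "\<exists>M. \<forall>m\<ge>M. \<forall>n\<ge>M. dist (s m) (s n) < e"
    proof (intro exI allI impI)
      fix m n assume "M \<le> m" "M \<le> n"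
      then have "(dist (s m) (s n))^2 < e^2" using M dist_s by (simp add: dist_real_def)
      then show "dist (s m) (s n) < e" using e by (meson power_less_imp_less_base less_imp_le)
    qed
  qed
  then obtain L where L: "s \<longlonglongrightarrow> L"
    using Cauchy_convergent_iff convergent_def by blast
  have "cinner (u k) (x - L) = 0" for k
  proof -
    have lim: "(\<lambda>N. cinner (u k) (s N)) \<longlonglongrightarrow> cinner (u k) L"
      by (rule tendsto_cinner_right[OF L])
    have ev: "eventually (\<lambda>N. cinner (u k) (s N) = c k) sequentially"
      using eventually_gt_at_top[of k] by eventually_elim (simp add: cs)
    have "(\<lambda>N. c k) \<longlonglongrightarrow> cinner (u k) L"
      using tendsto_cong[OF ev] lim by simp
    then have "cinner (u k) L = c k"
      using LIMSEQ_unique tendsto_const by blast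
    then show ?thesis by (simp add: cinner_diff_right c_def)
  qed
  then have "x - L = 0" using onb unfolding orthonormal_basis_def by blast
  moreover have "s = (\<lambda>N. \<Sum>n<N. scaleC (cinner (u n) x) (u n))"
    by (rule ext) (simp add: s_def c_def)
  ultimately show ?thesis using L by simp
qed




lemma scalar_est:
  fixes h :: "complex \<Rightarrow> complex"
  assumes holo: "h holomorphic_on ball z0 R" and cont: "continuous_on (cball z0 R) h"
    and R: "R > 0" and bnd: "\<And>z. z \<in> cball z0 R \<Longrightarrow> cmod (h z) \<le> B"
    and w: "w \<noteq> z0" "cmod (w - z0) \<le> R / 2"
  shows "cmod ((h w - h z0) / (w - z0) - deriv h z0) \<le> 2 * B * cmod (w - z0) / R^2"
proof -
  define a where "a n = (deriv ^^ n) h z0 / fact n" for n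
  define d where "d = w - z0"
  define t where "t = cmod d / R"
  have d0: "d \<noteq> 0" using w by (simp add: d_def)
  have t: "0 < t" "t \<le> 1/2" using w R d0 by (auto simp: t_def d_def field_simps)
  have B0: "0 \<le> B" using bnd[of z0] R by (smt (verit) centre_in_cball norm_ge_zero)
  have an: "cmod (a n) \<le> B / R^n" for n
  proof -
    have "cmod ((deriv ^^ n) h z0) \<le> fact n * B / R^n"
      by (rule Cauchy_inequality[OF holo cont R]) (auto intro!: bnd simp: dist_norm)
    then show ?thesis by (simp add: a_def norm_divide field_simps)
  qed
  have "w \<in> ball z0 R" using w R by (simp add: dist_norm norm_minus_commute)
  from holomorphic_power_series[OF holo this]
  have S: "(\<lambda>n. a n * d^n) sums h w" by (simp add: a_def d_def)
  have a01: "a 0 = h z0" "a (Suc 0) = deriv h z0" by (simp_all add: a_def)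
  have S2: "(\<lambda>n. a (n + 2) * d^(n + 2)) sums (h w - (h z0 + deriv h z0 * d))"
    using S sums_iff_shift[of "\<lambda>n. a n * d^n" 2 "h w - (h z0 + deriv h z0 * d)"]
    by (simp add: a01 numeral_2_eq_2)
  have geo: "(\<lambda>n. B * t^2 * t^n) sums (B * t^2 * (1 / (1 - t)))"
    using t by (intro sums_mult geometric_sums) simp
  have bd: "cmod (a (n + 2) * d^(n + 2)) \<le> B * t^2 * t^n" for n
  proof -
    have "cmod (a (n + 2) * d^(n + 2)) \<le> B / R^(n+2) * cmod d^(n+2)"
      unfolding norm_mult norm_power times_divide_eq_left[symmetric]
      by (intro mult_right_mono an) simp
    also have "\<dots> = B * t^(n+2)" using R by (simp add: t_def power_divide)
    also have "\<dots> = B * t^2 * t^n" by (simp add: power_add power2_eq_square mult.commute)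
    finally show ?thesis .
  qed
  have "cmod (h w - (h z0 + deriv h z0 * d)) \<le> B * t^2 * (1 / (1 - t))"
    using norm_suminf_le[OF bd sums_summable[OF geo]] S2 geo by (simp add: sums_iff)
  also have "\<dots> \<le> B * t^2 * 2"
    using t B0 by (intro mult_left_mono) (auto simp: field_simps)
  finally have *: "cmod (h w - h z0 - deriv h z0 * d) \<le> 2 * B * t^2" by (simp add: algebra_simps)
  have "(h w - h z0) / d - deriv h z0 = (h w - h z0 - deriv h z0 * d) / d"
    using d0 by (simp add: field_simps)
  then have "cmod ((h w - h z0) / d - deriv h z0) = cmod (h w - h z0 - deriv h z0 * d) / cmod d"
    by (simp add: norm_divide)
  also have "\<dots> \<le> 2 * B * t^2 / cmod d"
    using * d0 by (simp add: divide_right_mono)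
  also have "\<dots> = 2 * B * cmod d / R^2"
    using d0 R by (simp add: t_def power2_eq_square field_simps)
  finally show ?thesis by (simp add: d_def)
qed




lemma converse_at:
  fixes F :: "complex \<Rightarrow> 'x::chilbert \<Rightarrow> 'x" and u :: "nat \<Rightarrow> 'x"
  assumes op: "open \<Omega>" and bcl: "\<forall>z\<in>\<Omega>. bounded_clinear (F z)" and onb: "orthonormal_basis u"
    and an: "\<forall>n. vanalytic_on (\<lambda>z. F z (u n)) \<Omega>"
    and lb: "\<forall>K. compact K \<and> K \<subseteq> \<Omega> \<longrightarrow> (\<exists>M. \<forall>z\<in>K. onorm (F z) \<le> M)"
  shows "vanalytic_on (\<lambda>z. F z y) \<Omega>"
  unfolding vanalytic_on_def
proof
  fix z0 assume z0: "z0 \<in> \<Omega>"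
  have "\<forall>x\<in>\<Omega>. \<exists>e>0. cball x e \<subseteq> \<Omega>" using op open_contains_cball by auto
  then obtain R where R: "R > 0" "cball z0 R \<subseteq> \<Omega>" using z0 by blast
  have "compact (cball z0 R) \<and> cball z0 R \<subseteq> \<Omega>" using R by simp
  then obtain M where M: "\<forall>z\<in>cball z0 R. onorm (F z) \<le> M" using lb by presburger
  have bclz: "bounded_clinear (F z)" if "z \<in> cball z0 R" for z using bcl R that by blast
  have FM: "norm (F z x) \<le> M * norm x" if "z \<in> cball z0 R" for z x
    using bcl_onorm[OF bclz[OF that], of x] M that
    by (meson mult_right_mono norm_ge_zero order_trans)
  have zc: "z0 \<in> cball z0 R" using R by simp
  have M0: "0 \<le> M"
    using onorm_pos_le[OF bcl_bounded_linear[OF bclz[OF zc]]] M zc by (meson order_trans)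
  define c where "c n = cinner (u n) y" for n
  define s where "s N = (\<Sum>n<N. scaleC (c n) (u n))" for N
  have "s = (\<lambda>N. \<Sum>n<N. scaleC (cinner (u n) y) (u n))" by (rule ext) (simp add: s_def c_def)
  then have sy: "s \<longlonglongrightarrow> y" using onb_expansion[OF onb, of y] by simp
  define h where "h v z = cinner v (F z y)" for v z
  have hol: "h v holomorphic_on ball z0 R \<and> continuous_on (cball z0 R) (h v)" for v
  proof -
    define g where "g N z = (\<Sum>n<N. c n * cinner v (F z (u n)))" for N z
    have gh: "g N holomorphic_on \<Omega>" for N
      unfolding g_def
      by (intro holomorphic_on_sum holomorphic_on_mult holomorphic_on_const vanalytic_holo an[rule_format] op)
    have gc: "continuous_on (cball z0 R) (g N) \<and> g N holomorphic_on ball z0 R" for N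
      using gh[of N] R holomorphic_on_imp_continuous_on holomorphic_on_subset ball_subset_cball
      by (meson continuous_on_subset subset_trans)
    have geq: "g N z = cinner v (F z (s N))" if "z \<in> \<Omega>" for N z
      using that bcl by (simp add: g_def s_def bcl_sum bcl_scaleC cinner_sum_right cinner_scaleC_right)
    have ul: "uniform_limit (cball z0 R) g (h v) sequentially"
    proof (rule uniform_limitI)
      fix e :: real assume e: "e > 0"
      define A where "A = norm v * M"
      have A0: "0 \<le> A" using M0 by (simp add: A_def)
      have "e / (A + 1) > 0" using e A0 by simp
      then have ev: "eventually (\<lambda>N. norm (s N - y) < e / (A + 1)) sequentially"
        using sy by (simp add: tendsto_iff dist_norm)
      show "\<forall>\<^sub>F N in sequentially. \<forall>z\<in>cball z0 R. dist (g N z) (h v z) < e"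
        using ev
      proof eventually_elim
        case (elim N)
        show ?case
        proof
          fix z assume z: "z \<in> cball z0 R"
          then have zO: "z \<in> \<Omega>" using R by blast
          have "dist (g N z) (h v z) = cmod (cinner v (F z (s N - y)))"
            using zO bcl by (simp add: geq h_def dist_norm bcl_diff cinner_diff_right)
          also have "\<dots> \<le> norm v * norm (F z (s N - y))" by (rule Cauchy_Schwarz_c)
          also have "\<dots> \<le> norm v * (M * norm (s N - y))"
            by (intro mult_left_mono FM z) simp
          also have "\<dots> = A * norm (s N - y)" by (simp add: A_def)
          also have "\<dots> \<le> A * (e / (A + 1))" using elim A0 by (intro mult_left_mono) auto
          also have "\<dots> < e" using A0 e by (simp add: field_simps)
          finally show "dist (g N z) (h v z) < e" .
        qed
      qed
    qed
    obtain "continuous_on (cball z0 R) (h v)" "h v holomorphic_on ball z0 R"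
      by (rule holomorphic_uniform_limit[OF _ ul]) (use gc in auto)
    then show ?thesis by simp
  qed
  have hb: "cmod (h v z) \<le> norm v * M * norm y" if "z \<in> cball z0 R" for v z
  proof -
    have "cmod (h v z) \<le> norm v * norm (F z y)" unfolding h_def by (rule Cauchy_Schwarz_c)
    also have "\<dots> \<le> norm v * (M * norm y)" by (intro mult_left_mono FM that) simp
    finally show ?thesis by (simp add: mult.assoc)
  qed
  define D where "D w = scaleC (inverse (w - z0)) (F w y - F z0 y)" for w
  have Dq: "cinner v (D w) = (h v w - h v z0) / (w - z0)" for v w
    by (simp add: D_def h_def cinner_scaleC_right cinner_diff_right divide_inverse mult.commute)
  define C where "C = 2 * M * norm y / R^2"
  have C0: "0 \<le> C" using M0 R by (simp add: C_def)
  have est: "norm (D w - D w') \<le> C * (cmod (w - z0) + cmod (w' - z0))"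
    if w: "w \<noteq> z0" "cmod (w - z0) \<le> R / 2" and w': "w' \<noteq> z0" "cmod (w' - z0) \<le> R / 2" for w w'
  proof -
    define v where "v = D w - D w'"
    define a where "a = deriv (h v) z0"
    have e1: "cmod ((h v w - h v z0) / (w - z0) - a) \<le> 2 * (norm v * M * norm y) * cmod (w - z0) / R^2"
      unfolding a_def using hol[of v] R hb w by (intro scalar_est) auto
    have e2: "cmod ((h v w' - h v z0) / (w' - z0) - a) \<le> 2 * (norm v * M * norm y) * cmod (w' - z0) / R^2"
      unfolding a_def using hol[of v] R hb w' by (intro scalar_est) auto
    have "cinner v v = cinner v (D w) - cinner v (D w')"
      using cinner_diff_right[of v "D w" "D w'"] by (simp only: v_def)
    then have "cinner v v = (h v w - h v z0) / (w - z0) - (h v w' - h v z0) / (w' - z0)"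
      by (simp only: Dq)
    then have "(norm v)^2 = cmod (((h v w - h v z0) / (w - z0) - a) - ((h v w' - h v z0) / (w' - z0) - a))"
      by (metis cinner_self_norm norm_of_real abs_power2 diff_diff_eq2 diff_add_cancel add_diff_cancel_left)
    also have "\<dots> \<le> cmod ((h v w - h v z0) / (w - z0) - a) + cmod ((h v w' - h v z0) / (w' - z0) - a)"
      by (rule norm_triangle_ineq4)
    also have "\<dots> \<le> 2 * (norm v * M * norm y) * cmod (w - z0) / R^2 + 2 * (norm v * M * norm y) * cmod (w' - z0) / R^2"
      using e1 e2 by (rule add_mono)
    also have "\<dots> = norm v * (C * (cmod (w - z0) + cmod (w' - z0)))"
      using R by (simp add: C_def field_simps)
    finally have *: "(norm v)^2 \<le> norm v * (C * (cmod (w - z0) + cmod (w' - z0)))" .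
    show ?thesis
    proof (cases "norm v = 0")
      case True then show ?thesis using C0 by (simp add: v_def)
    next
      case False
      then have "norm v > 0" by simp
      with * show ?thesis by (simp add: v_def power2_eq_square)
    qed
  qed
  define p where "p k = z0 + of_real (R / 2 * inverse (real (Suc k)))" for k
  have pz: "p k \<noteq> z0" "cmod (p k - z0) = R / 2 * inverse (real (Suc k))" "cmod (p k - z0) \<le> R / 2" for k
  proof -
    have pd: "p k - z0 = of_real (R / 2 * inverse (real (Suc k)))" by (simp add: p_def)
    have pos: "R / 2 * inverse (real (Suc k)) > 0" using R by simp
    have n: "cmod (p k - z0) = R / 2 * inverse (real (Suc k))"
      unfolding pd norm_of_real using pos by simp
    have "inverse (real (Suc k)) \<le> 1" using inverse_le_1_iff[of "real (Suc k)"] by simp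
    then have "R / 2 * inverse (real (Suc k)) \<le> R / 2 * 1" using R by (intro mult_left_mono) auto
    then show "p k \<noteq> z0" "cmod (p k - z0) = R / 2 * inverse (real (Suc k))" "cmod (p k - z0) \<le> R / 2"
      using n pos by auto
  qed
  have "Cauchy (\<lambda>k. D (p k))"
  proof (rule metric_CauchyI)
    fix e :: real assume e: "e > 0"
    obtain N where N: "C * R / e < real (Suc N)" using reals_Archimedean2 by (metis less_trans lessI of_nat_less_iff)
    have NN: "C * R * inverse (real (Suc N)) < e" using N e by (simp add: field_simps)
    show "\<exists>M. \<forall>m\<ge>M. \<forall>n\<ge>M. dist (D (p m)) (D (p n)) < e"
    proof (intro exI allI impI)
      fix m n assume mn: "N \<le> m" "N \<le> n"
      have i: "inverse (real (Suc k)) \<le> inverse (real (Suc N))" if "N \<le> k" for k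
        using that by (simp add: le_imp_inverse_le)
      have "dist (D (p m)) (D (p n)) \<le> C * (cmod (p m - z0) + cmod (p n - z0))"
        using est pz by (simp add: dist_norm)
      also have "\<dots> \<le> C * (R / 2 * inverse (real (Suc N)) + R / 2 * inverse (real (Suc N)))"
        using C0 R i mn unfolding pz(2) by (intro mult_left_mono add_mono mult_left_mono) auto
      also have "\<dots> = C * R * inverse (real (Suc N))" by simp
      also have "\<dots> < e" by (rule NN)
      finally show "dist (D (p m)) (D (p n)) < e" .
    qed
  qed
  then obtain d where d: "(\<lambda>k. D (p k)) \<longlonglongrightarrow> d"
    using Cauchy_convergent_iff convergent_def by blast
  have dl: "norm (D w - d) \<le> C * cmod (w - z0)" if w: "w \<noteq> z0" "cmod (w - z0) \<le> R / 2" for w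
  proof (rule tendsto_le[OF trivial_limit_sequentially])
    show "(\<lambda>k. norm (D w - D (p k))) \<longlonglongrightarrow> norm (D w - d)"
      by (intro tendsto_intros d)
    have "(\<lambda>k. C * (cmod (w - z0) + R / 2 * inverse (real (Suc k)))) \<longlonglongrightarrow> C * (cmod (w - z0) + R / 2 * 0)"
      by (intro tendsto_intros LIMSEQ_inverse_real_of_nat)
    then show "(\<lambda>k. C * (cmod (w - z0) + R / 2 * inverse (real (Suc k)))) \<longlonglongrightarrow> C * cmod (w - z0)"
      by simp
    show "\<forall>\<^sub>F k in sequentially. norm (D w - D (p k)) \<le> C * (cmod (w - z0) + R / 2 * inverse (real (Suc k)))"
      using est[OF w pz(1) pz(3)] pz(2) by simp
  qed
  have "((\<lambda>w. D w - d) \<longlongrightarrow> 0) (at z0)"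
  proof (rule Lim_null_comparison)
    show "\<forall>\<^sub>F w in at z0. norm (D w - d) \<le> C * cmod (w - z0)"
      unfolding eventually_at using R
      by (intro exI[of _ "R/2"]) (auto simp: dist_norm intro!: dl)
    have "((\<lambda>w. C * cmod (w - z0)) \<longlongrightarrow> C * cmod (z0 - z0)) (at z0)"
      by (intro tendsto_intros)
    then show "((\<lambda>w. C * cmod (w - z0)) \<longlongrightarrow> 0) (at z0)" by simp
  qed
  then have "(D \<longlongrightarrow> d) (at z0)" by (rule LIM_zero_cancel)
  then show "\<exists>d. ((\<lambda>w. scaleC (inverse (w - z0)) (F w y - F z0 y)) \<longlongrightarrow> d) (at z0)"
    unfolding D_def by blast
qed




theorem theorem3p2:
  fixes F :: "complex \<Rightarrow> 'x::chilbert \<Rightarrow> 'x"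
    and \<Omega> :: "complex set"
    and u :: "nat \<Rightarrow> 'x"
  assumes "open \<Omega>" and "connected \<Omega>" and "\<Omega> \<noteq> {}"
    and "\<forall>z\<in>\<Omega>. bounded_clinear (F z)"
    and "orthonormal_basis u"
  shows "(\<forall>f\<in>H_F F. vanalytic_on f \<Omega>) \<longleftrightarrow>
           ((\<forall>n. vanalytic_on (\<lambda>z. F z (u n)) \<Omega>) \<and>
            (\<forall>K. compact K \<and> K \<subseteq> \<Omega> \<longrightarrow> (\<exists>M. \<forall>z\<in>K. onorm (F z) \<le> M)))"
proof
  assume A: "\<forall>f\<in>H_F F. vanalytic_on f \<Omega>"
  have an: "vanalytic_on (\<lambda>z. F z x) \<Omega>" for x
  proof -
    have "(\<lambda>z. F z x) \<in> H_F F" unfolding H_F_def by (rule CollectI, rule exI, rule refl)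
    then show ?thesis using A by (rule bspec[rotated])
  qed
  show "(\<forall>n. vanalytic_on (\<lambda>z. F z (u n)) \<Omega>) \<and>
            (\<forall>K. compact K \<and> K \<subseteq> \<Omega> \<longrightarrow> (\<exists>M. \<forall>z\<in>K. onorm (F z) \<le> M))"
  proof (intro conjI allI impI)
    show "vanalytic_on (\<lambda>z. F z (u n)) \<Omega>" for n by (rule an)
    fix K assume K: "compact K \<and> K \<subseteq> \<Omega>"
    show "\<exists>M. \<forall>z\<in>K. onorm (F z) \<le> M"
    proof (rule ubp)
      show "\<forall>z\<in>K. bounded_clinear (F z)" using K assms(4) by blast
      show "\<forall>x. \<exists>B. \<forall>z\<in>K. norm (F z x) \<le> B"
      proof
        fix x
        have "\<forall>z\<in>K. isCont (\<lambda>z. F z x) z"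
        proof
          fix z assume "z \<in> K"
          then have "z \<in> \<Omega>" using K by blast
          then show "isCont (\<lambda>z. F z x) z" by (rule vanalytic_continuous[OF an])
        qed
        then have "continuous_on K (\<lambda>z. F z x)" by (rule continuous_at_imp_continuous_on)
        then have "bounded ((\<lambda>z. F z x) ` K)"
          by (rule compact_imp_bounded[OF compact_continuous_image[OF _ K[THEN conjunct1]]])
        then show "\<exists>B. \<forall>z\<in>K. norm (F z x) \<le> B" unfolding bounded_iff by blast
      qed
    qed
  qed
next
  assume B: "(\<forall>n. vanalytic_on (\<lambda>z. F z (u n)) \<Omega>) \<and>
            (\<forall>K. compact K \<and> K \<subseteq> \<Omega> \<longrightarrow> (\<exists>M. \<forall>z\<in>K. onorm (F z) \<le> M))"
  show "\<forall>f\<in>H_F F. vanalytic_on f \<Omega>"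
  proof
    fix f assume "f \<in> H_F F"
    then obtain y where fy: "f = (\<lambda>z. F z y)" unfolding H_F_def by blast
    show "vanalytic_on f \<Omega>"
      unfolding fy by (rule converse_at[OF assms(1) assms(4) assms(5) B[THEN conjunct1] B[THEN conjunct2]])
  qed
qed


end
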